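(* Any quantum oracle algorithm that solves $\mathsf{LCS\text{-}RLE}$ with probability at least $2/3$ requires $\tilde\Omega(n)$ queries, where $n$ is the encoded length of the inputs.
   Context: A string $\tilde s$ has run-length encoding (RLE) $s=s[1]\cdots s[m]$, its sequence of maximal runs of identical characters, each run having character $C(s[i])$ and length $R(s[i])$; $|s|=m$ is the encoded length. An RLE string $t$ is a generalized substring of $s$ if $\tilde t$ is a substring of $\tilde s$. The problem $\mathsf{LCS\text{-}RLE}$: given quantum oracle access to two RLE strings $A$ and $B$ only through the unitaries $|i\rangle|c\rangle|r\rangle\mapsto|i\rangle|c\oplus C(S[i])\rangle|r\oplus R(S[i])\rangle$ for $S\in\{A,B\}$ (no prefix-sum oracle), find a longest common generalized substring $s$ of $A$ and $B$ (i.e. $\tilde s$ is a longest common substring of $\tilde A$ and $\tilde B$) and output a triple $(i_A,i_B,\ell)$ with $\ell=|s|$, where an occurrence of $\tilde s$ in $\tilde A$ starts within the run $A[i_A]$ and one in $\tilde B$ starts within the run $B[i_B]$. $\tilde\Omega(\cdot)$ hides polylogarithmic factors. *)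

theory Defs
  imports Complex_Main
begin

text \<open>An RLE string is a list of runs (character, run length); runs are indexed from 0.\<close>
type_synonym rle = "(nat \<times> nat) list"

definition decode :: "rle \<Rightarrow> nat list" where
  "decode S = concat (map (\<lambda>(c, r). replicate r c) S)"

definition valid_rle :: "nat \<Rightarrow> nat \<Rightarrow> rle \<Rightarrow> bool" where
  "valid_rle dc dr S \<longleftrightarrow>
     (\<forall>i < length S. fst (S ! i) < dc \<and> 0 < snd (S ! i) \<and> snd (S ! i) < dr) \<and>
     (\<forall>i. Suc i < length S \<longrightarrow> fst (S ! i) \<noteq> fst (S ! Suc i))"

text \<open>Encoded length (number of maximal runs) of a plain string.\<close>
definition enc_len :: "nat list \<Rightarrow> nat" where
  "enc_len u = length (remdups_adj u)"

definition occurs_at :: "nat list \<Rightarrow> nat list \<Rightarrow> nat \<Rightarrow> bool" where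
  "occurs_at u v p \<longleftrightarrow> p + length u \<le> length v \<and> take (length u) (drop p v) = u"

definition run_start :: "rle \<Rightarrow> nat \<Rightarrow> nat" where
  "run_start S i = sum_list (map snd (take i S))"

definition starts_in_run :: "rle \<Rightarrow> nat \<Rightarrow> nat \<Rightarrow> bool" where
  "starts_in_run S i p \<longleftrightarrow> i < length S \<and> run_start S i \<le> p \<and> p < run_start S (Suc i)"

definition common_substr :: "rle \<Rightarrow> rle \<Rightarrow> nat list \<Rightarrow> bool" where
  "common_substr A B u \<longleftrightarrow> (\<exists>p. occurs_at u (decode A) p) \<and> (\<exists>q. occurs_at u (decode B) q)"

definition longest_common_substr :: "rle \<Rightarrow> rle \<Rightarrow> nat list \<Rightarrow> bool" where
  "longest_common_substr A B u \<longleftrightarrow>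
     common_substr A B u \<and> (\<forall>v. common_substr A B v \<longrightarrow> length v \<le> length u)"

definition lcs_rle_correct :: "rle \<Rightarrow> rle \<Rightarrow> nat \<times> nat \<times> nat \<Rightarrow> bool" where
  "lcs_rle_correct A B out \<longleftrightarrow>
     (case out of (iA, iB, l) \<Rightarrow>
       \<exists>u. longest_common_substr A B u \<and> l = enc_len u \<and>
           (\<exists>p. occurs_at u (decode A) p \<and> starts_in_run A iA p) \<and>
           (\<exists>q. occurs_at u (decode B) q \<and> starts_in_run B iB q))"

text \<open>Computational basis: index register {0..<n}, character register {0..<dc},
  run-length register {0..<dr}, workspace {0..<m}.\<close>
type_synonym basis = "nat \<times> nat \<times> nat \<times> nat"
type_synonym qstate = "basis \<Rightarrow> complex"
type_synonym qop = "basis \<Rightarrow> basis \<Rightarrow> complex"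

definition basis_set :: "nat \<Rightarrow> nat \<Rightarrow> nat \<Rightarrow> nat \<Rightarrow> basis set" where
  "basis_set n dc dr m = {0..<n} \<times> {0..<dc} \<times> {0..<dr} \<times> {0..<m}"

definition unitary_on :: "basis set \<Rightarrow> qop \<Rightarrow> bool" where
  "unitary_on X U \<longleftrightarrow>
     (\<forall>x\<in>X. \<forall>y\<in>X. (\<Sum>z\<in>X. U x z * cnj (U y z)) = (if x = y then 1 else 0))"

definition apply_op :: "basis set \<Rightarrow> qop \<Rightarrow> qstate \<Rightarrow> qstate" where
  "apply_op X U \<psi> = (\<lambda>x. \<Sum>y\<in>X. U x y * \<psi> y)"

definition oracle_map :: "nat \<Rightarrow> nat \<Rightarrow> rle \<Rightarrow> basis \<Rightarrow> basis" where
  "oracle_map dc dr S = (\<lambda>(i, c, r, w).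
     (i, (c + fst (S ! i)) mod dc, (r + snd (S ! i)) mod dr, w))"

definition apply_oracle :: "basis set \<Rightarrow> nat \<Rightarrow> nat \<Rightarrow> rle \<Rightarrow> qstate \<Rightarrow> qstate" where
  "apply_oracle X dc dr S \<psi> = (\<lambda>x. \<Sum>y\<in>X. if oracle_map dc dr S y = x then \<psi> y else 0)"

definition init_state :: qstate where
  "init_state = (\<lambda>x. if x = (0, 0, 0, 0) then 1 else 0)"

text \<open>State after t queries: U_t O_{sel(t-1)} U_{t-1} ... O_{sel 0} U_0 |0>;
  sel k = False means the k-th query goes to the oracle of A, True to that of B.\<close>
fun run_alg :: "nat \<Rightarrow> nat \<Rightarrow> nat \<Rightarrow> nat \<Rightarrow> (nat \<Rightarrow> qop) \<Rightarrow> (nat \<Rightarrow> bool)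
                 \<Rightarrow> rle \<Rightarrow> rle \<Rightarrow> nat \<Rightarrow> qstate" where
  "run_alg n dc dr m U sel A B 0 = apply_op (basis_set n dc dr m) (U 0) init_state"
| "run_alg n dc dr m U sel A B (Suc t) =
     apply_op (basis_set n dc dr m) (U (Suc t))
       (apply_oracle (basis_set n dc dr m) dc dr (if sel t then B else A)
          (run_alg n dc dr m U sel A B t))"

definition success_prob :: "nat \<Rightarrow> nat \<Rightarrow> nat \<Rightarrow> nat \<Rightarrow> (nat \<Rightarrow> qop) \<Rightarrow> (nat \<Rightarrow> bool)
     \<Rightarrow> (basis \<Rightarrow> nat \<times> nat \<times> nat) \<Rightarrow> nat \<Rightarrow> rle \<Rightarrow> rle \<Rightarrow> real" where
  "success_prob n dc dr m U sel out T A B =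
     (\<Sum>x\<in>basis_set n dc dr m.
        if lcs_rle_correct A B (out x) then (cmod (run_alg n dc dr m U sel A B T x))\<^sup>2 else 0)"

end

theory Submission
  imports Defs "Jordan_Normal_Form.Determinant"
begin


lemma colortho:
  assumes fin: "finite X" and un: "unitary_on X U" and y: "y \<in> X" and z: "z \<in> X"
  shows "(\<Sum>x\<in>X. cnj (U x y) * U x z) = (if y = z then 1 else 0)"
proof -
  define N where "N = card X"
  obtain e where e: "bij_betw e {0..<N} X" using ex_bij_betw_nat_finite[OF fin] N_def by blast
  define M :: "complex mat" where "M = mat N N (\<lambda>(i,j). U (e i) (e j))"
  define M' :: "complex mat" where "M' = mat N N (\<lambda>(i,j). cnj (U (e j) (e i)))"
  have eX: "i < N \<Longrightarrow> e i \<in> X" for i using e by (auto simp: bij_betw_def)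
  have einj: "i < N \<Longrightarrow> j < N \<Longrightarrow> e i = e j \<longleftrightarrow> i = j" for i j
    using e by (auto simp: bij_betw_def inj_on_def)
  have reidx: "(\<Sum>l<N. f (e l)) = (\<Sum>x\<in>X. f x)" for f :: "_ \<Rightarrow> complex"
    using sum.reindex_bij_betw[OF e, of f] by (simp add: atLeast0LessThan)
  have MC: "M \<in> carrier_mat N N" "M' \<in> carrier_mat N N" by (auto simp: M_def M'_def)
  have "M * M' = 1\<^sub>m N"
  proof (rule eq_matI)
    fix i j assume ij: "i < dim_row (1\<^sub>m N)" "j < dim_col (1\<^sub>m N)"
    hence "(M * M') $$ (i,j) = (\<Sum>l<N. U (e i) (e l) * cnj (U (e j) (e l)))"
      by (simp add: M_def M'_def scalar_prod_def atLeast0LessThan)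
    also have "\<dots> = (\<Sum>x\<in>X. U (e i) x * cnj (U (e j) x))" by (rule reidx)
    also have "\<dots> = (if e i = e j then 1 else 0)" using un ij eX by (simp add: unitary_on_def)
    also have "\<dots> = 1\<^sub>m N $$ (i,j)" using ij einj by simp
    finally show "(M * M') $$ (i,j) = 1\<^sub>m N $$ (i,j)" .
  qed (auto simp: M_def M'_def)
  hence MM: "M' * M = 1\<^sub>m N" using mat_mult_left_right_inverse[OF MC] by blast
  obtain i where i: "i < N" "e i = y" using e y by (auto simp: bij_betw_def)
  obtain j where j: "j < N" "e j = z" using e z by (auto simp: bij_betw_def)
  have "(\<Sum>x\<in>X. cnj (U x y) * U x z) = (\<Sum>l<N. cnj (U (e l) (e i)) * U (e l) (e j))"
    using reidx[of "\<lambda>x. cnj (U x y) * U x z"] i j by simp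
  also have "\<dots> = (M' * M) $$ (i,j)" using i j
    by (simp add: M_def M'_def scalar_prod_def atLeast0LessThan)
  also have "\<dots> = (if y = z then 1 else 0)" using MM i j einj by auto
  finally show ?thesis .
qed



definition ip :: "basis set \<Rightarrow> qstate \<Rightarrow> qstate \<Rightarrow> complex" where
  "ip X \<psi> \<phi> = (\<Sum>x\<in>X. \<psi> x * cnj (\<phi> x))"

definition nrm :: "basis set \<Rightarrow> qstate \<Rightarrow> real" where
  "nrm X \<psi> = (\<Sum>x\<in>X. (cmod (\<psi> x))\<^sup>2)"

definition fm :: "basis set \<Rightarrow> nat \<Rightarrow> qstate \<Rightarrow> real" where
  "fm X j \<psi> = (\<Sum>x\<in>{x\<in>X. fst x = j}. (cmod (\<psi> x))\<^sup>2)"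

lemma ip_self: "ip X \<psi> \<psi> = complex_of_real (nrm X \<psi>)"
  unfolding ip_def nrm_def of_real_sum by (simp add: complex_norm_square[symmetric])

lemma nrm_ip: "nrm X \<psi> = Re (ip X \<psi> \<psi>)"
  by (simp add: ip_self)

lemma ip_apply_op:
  assumes fin: "finite X" and un: "unitary_on X U"
  shows "ip X (apply_op X U \<psi>) (apply_op X U \<phi>) = ip X \<psi> \<phi>"
proof -
  have "ip X (apply_op X U \<psi>) (apply_op X U \<phi>) =
        (\<Sum>x\<in>X. \<Sum>y\<in>X. \<Sum>z\<in>X. \<psi> y * cnj (\<phi> z) * (cnj (U x z) * U x y))"
    apply (simp add: ip_def apply_op_def sum_distrib_left sum_distrib_right mult_ac)
    apply (rule sum.cong[OF refl])
    apply (rule sum.swap)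
    done
  also have "\<dots> = (\<Sum>y\<in>X. \<Sum>x\<in>X. \<Sum>z\<in>X. \<psi> y * cnj (\<phi> z) * (cnj (U x z) * U x y))"
    by (rule sum.swap)
  also have "\<dots> = (\<Sum>y\<in>X. \<Sum>z\<in>X. \<Sum>x\<in>X. \<psi> y * cnj (\<phi> z) * (cnj (U x z) * U x y))"
    by (rule sum.cong[OF refl], rule sum.swap)
  also have "\<dots> = (\<Sum>y\<in>X. \<Sum>z\<in>X. \<psi> y * cnj (\<phi> z) * (\<Sum>x\<in>X. cnj (U x z) * U x y))"
    by (simp add: sum_distrib_left)
  also have "\<dots> = (\<Sum>y\<in>X. \<Sum>z\<in>X. \<psi> y * cnj (\<phi> z) * (if z = y then 1 else 0))"
    by (intro sum.cong refl) (simp add: colortho[OF fin un])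
  also have "\<dots> = ip X \<psi> \<phi>" using fin by (simp add: ip_def if_distrib cong: if_cong)
  finally show ?thesis .
qed

lemma nrm_apply_op:
  assumes "finite X" "unitary_on X U"
  shows "nrm X (apply_op X U \<psi>) = nrm X \<psi>"
  using ip_apply_op[OF assms] by (simp add: nrm_ip)



definition ginv :: "nat \<Rightarrow> nat \<Rightarrow> rle \<Rightarrow> basis \<Rightarrow> basis" where
  "ginv dc dr S = (\<lambda>(i, c, r, w). (i, (c + (dc - fst (S ! i))) mod dc, (r + (dr - snd (S ! i))) mod dr, w))"

definition goodS :: "nat \<Rightarrow> nat \<Rightarrow> nat \<Rightarrow> rle \<Rightarrow> bool" where
  "goodS n dc dr S \<longleftrightarrow> (\<forall>i<n. fst (S ! i) < dc \<and> snd (S ! i) < dr)"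

lemma modinv1: "c < (d::nat) \<Longrightarrow> a < d \<Longrightarrow> ((c + (d - a)) mod d + a) mod d = c"
proof -
  assume a: "c < d" "a < d"
  have "((c + (d - a)) mod d + a) mod d = (c + (d - a) + a) mod d" by (simp add: mod_add_left_eq)
  also have "c + (d - a) + a = c + d" using a by simp
  finally show ?thesis using a by simp
qed

lemma modinv2: "c < (d::nat) \<Longrightarrow> a < d \<Longrightarrow> ((c + a) mod d + (d - a)) mod d = c"
proof -
  assume a: "c < d" "a < d"
  have "((c + a) mod d + (d - a)) mod d = (c + a + (d - a)) mod d" by (simp add: mod_add_left_eq)
  also have "c + a + (d - a) = c + d" using a by simp
  finally show ?thesis using a by simp
qed

lemma basis_mem: "(i, c, r, w) \<in> basis_set n dc dr m \<longleftrightarrow> i < n \<and> c < dc \<and> r < dr \<and> w < m"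
  by (auto simp: basis_set_def)

lemma finite_basis: "finite (basis_set n dc dr m)"
  by (simp add: basis_set_def)

lemma ginv_mem: "goodS n dc dr S \<Longrightarrow> x \<in> basis_set n dc dr m \<Longrightarrow> ginv dc dr S x \<in> basis_set n dc dr m"
  by (cases x) (auto simp: ginv_def basis_mem)

lemma omap_mem: "goodS n dc dr S \<Longrightarrow> x \<in> basis_set n dc dr m \<Longrightarrow> oracle_map dc dr S x \<in> basis_set n dc dr m"
  by (cases x) (auto simp: oracle_map_def basis_mem)

lemma omap_ginv: "goodS n dc dr S \<Longrightarrow> x \<in> basis_set n dc dr m \<Longrightarrow> oracle_map dc dr S (ginv dc dr S x) = x"
  by (cases x) (auto simp: ginv_def oracle_map_def basis_mem goodS_def modinv1)

lemma ginv_omap: "goodS n dc dr S \<Longrightarrow> x \<in> basis_set n dc dr m \<Longrightarrow> ginv dc dr S (oracle_map dc dr S x) = x"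
  by (cases x) (auto simp: ginv_def oracle_map_def basis_mem goodS_def modinv2)

lemma fst_ginv[simp]: "fst (ginv dc dr S x) = fst x"
  by (cases x) (auto simp: ginv_def)

lemma fst_omap[simp]: "fst (oracle_map dc dr S x) = fst x"
  by (cases x) (auto simp: oracle_map_def)

lemma apply_oracle_eq:
  assumes g: "goodS n dc dr S" and x: "x \<in> basis_set n dc dr m"
  shows "apply_oracle (basis_set n dc dr m) dc dr S \<psi> x = \<psi> (ginv dc dr S x)"
proof -
  let ?X = "basis_set n dc dr m"
  have "apply_oracle ?X dc dr S \<psi> x = (\<Sum>y\<in>?X. if y = ginv dc dr S x then \<psi> y else 0)"
    unfolding apply_oracle_def
  proof (rule sum.cong[OF refl])
    fix y assume y: "y \<in> ?X"
    have "oracle_map dc dr S y = x \<longleftrightarrow> y = ginv dc dr S x"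
      using omap_ginv[OF g x] ginv_omap[OF g y] by metis
    then show "(if oracle_map dc dr S y = x then \<psi> y else 0) = (if y = ginv dc dr S x then \<psi> y else 0)"
      by simp
  qed
  also have "\<dots> = \<psi> (ginv dc dr S x)" using ginv_mem[OF g x] finite_basis by simp
  finally show ?thesis .
qed

lemma reindex_ginv:
  assumes g: "goodS n dc dr S" and P: "\<And>x. P (ginv dc dr S x) = P x"
  shows "(\<Sum>x\<in>{x\<in>basis_set n dc dr m. P x}. f (ginv dc dr S x)) = (\<Sum>x\<in>{x\<in>basis_set n dc dr m. P x}. (f x :: 'a::comm_monoid_add))"
proof (rule sum.reindex_bij_witness[where i = "oracle_map dc dr S" and j = "ginv dc dr S"])
  fix a assume a: "a \<in> {x\<in>basis_set n dc dr m. P x}"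
  then show "oracle_map dc dr S (ginv dc dr S a) = a"
    using omap_ginv[OF g, of a m] by auto
  show "ginv dc dr S a \<in> {x\<in>basis_set n dc dr m. P x}"
    using ginv_mem[OF g, of a m] P[of a] a by auto
next
  fix b assume b: "b \<in> {x\<in>basis_set n dc dr m. P x}"
  then show "ginv dc dr S (oracle_map dc dr S b) = b" using ginv_omap[OF g, of b m] by auto
  have "P (oracle_map dc dr S b)" using P[of "oracle_map dc dr S b"] ginv_omap[OF g, of b m] b by auto
  then show "oracle_map dc dr S b \<in> {x\<in>basis_set n dc dr m. P x}" using omap_mem[OF g, of b m] b by auto
qed simp

lemma ip_oracle:
  assumes g: "goodS n dc dr S"
  shows "ip (basis_set n dc dr m) (apply_oracle (basis_set n dc dr m) dc dr S \<psi>) (apply_oracle (basis_set n dc dr m) dc dr S \<phi>)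
       = ip (basis_set n dc dr m) \<psi> \<phi>"
proof -
  let ?X = "basis_set n dc dr m"
  have "ip ?X (apply_oracle ?X dc dr S \<psi>) (apply_oracle ?X dc dr S \<phi>) =
     (\<Sum>x\<in>{x\<in>?X. True}. \<psi> (ginv dc dr S x) * cnj (\<phi> (ginv dc dr S x)))"
    unfolding ip_def by (intro sum.cong) (auto simp: apply_oracle_eq[OF g])
  also have "\<dots> = (\<Sum>x\<in>{x\<in>?X. True}. \<psi> x * cnj (\<phi> x))"
    by (rule reindex_ginv[OF g, where f = "\<lambda>y. \<psi> y * cnj (\<phi> y)"]) simp
  finally show ?thesis by (simp add: ip_def)
qed

lemma nrm_oracle:
  assumes g: "goodS n dc dr S"
  shows "nrm (basis_set n dc dr m) (apply_oracle (basis_set n dc dr m) dc dr S \<psi>) = nrm (basis_set n dc dr m) \<psi>"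
  using ip_oracle[OF g] by (simp add: nrm_ip)

lemma ineq3: "(a::real) \<ge> 0 \<Longrightarrow> b \<ge> 0 \<Longrightarrow> c \<ge> 0 \<Longrightarrow> a * (b + c) \<le> a\<^sup>2 + (b\<^sup>2 + c\<^sup>2) / 2"
proof -
  have "0 \<le> (a - b)\<^sup>2 + (a - c)\<^sup>2" by simp
  then have "2 * (a * (b + c)) \<le> 2 * a\<^sup>2 + b\<^sup>2 + c\<^sup>2" by (simp add: power2_eq_square algebra_simps)
  then show ?thesis by (simp add: field_simps)
qed

lemma ip_oracle_diff:
  assumes g: "goodS n dc dr S" and g': "goodS n dc dr S'"
    and same: "\<And>i. i \<noteq> j \<Longrightarrow> S ! i = S' ! i"
  shows "cmod (ip (basis_set n dc dr m) (apply_oracle (basis_set n dc dr m) dc dr S \<psi>) (apply_oracle (basis_set n dc dr m) dc dr S' \<phi>)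
           - ip (basis_set n dc dr m) \<psi> \<phi>)
       \<le> fm (basis_set n dc dr m) j \<psi> + fm (basis_set n dc dr m) j \<phi>"
proof -
  let ?X = "basis_set n dc dr m"
  let ?F = "{x\<in>?X. fst x = j}"
  let ?g = "ginv dc dr S" and ?g' = "ginv dc dr S'"
  have fin: "finite ?X" by (rule finite_basis)
  have eqg: "x \<in> ?X \<Longrightarrow> fst x \<noteq> j \<Longrightarrow> ?g' x = ?g x" for x
    using same by (cases x) (auto simp: ginv_def)
  have "ip ?X (apply_oracle ?X dc dr S \<psi>) (apply_oracle ?X dc dr S' \<phi>) - ip ?X \<psi> \<phi>
      = ip ?X (apply_oracle ?X dc dr S \<psi>) (apply_oracle ?X dc dr S' \<phi>)
        - ip ?X (apply_oracle ?X dc dr S \<psi>) (apply_oracle ?X dc dr S \<phi>)"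
    using ip_oracle[OF g] by simp
  also have "\<dots> = (\<Sum>x\<in>?X. \<psi> (?g x) * (cnj (\<phi> (?g' x)) - cnj (\<phi> (?g x))))"
    unfolding ip_def sum_subtractf[symmetric]
    by (intro sum.cong) (auto simp: apply_oracle_eq[OF g] apply_oracle_eq[OF g'] algebra_simps)
  also have "\<dots> = (\<Sum>x\<in>?F. \<psi> (?g x) * (cnj (\<phi> (?g' x)) - cnj (\<phi> (?g x))))"
    using fin by (intro sum.mono_neutral_right) (auto simp: eqg)
  finally have eq: "ip ?X (apply_oracle ?X dc dr S \<psi>) (apply_oracle ?X dc dr S' \<phi>) - ip ?X \<psi> \<phi>
       = (\<Sum>x\<in>?F. \<psi> (?g x) * (cnj (\<phi> (?g' x)) - cnj (\<phi> (?g x))))" .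
  have "cmod (\<Sum>x\<in>?F. \<psi> (?g x) * (cnj (\<phi> (?g' x)) - cnj (\<phi> (?g x))))
      \<le> (\<Sum>x\<in>?F. cmod (\<psi> (?g x)) * (cmod (\<phi> (?g' x)) + cmod (\<phi> (?g x))))"
  proof -
    have "cmod (\<Sum>x\<in>?F. \<psi> (?g x) * (cnj (\<phi> (?g' x)) - cnj (\<phi> (?g x))))
       \<le> (\<Sum>x\<in>?F. cmod (\<psi> (?g x) * (cnj (\<phi> (?g' x)) - cnj (\<phi> (?g x)))))"
      by (rule norm_sum)
    also have "\<dots> \<le> (\<Sum>x\<in>?F. cmod (\<psi> (?g x)) * (cmod (\<phi> (?g' x)) + cmod (\<phi> (?g x))))"
    proof (rule sum_mono)
      fix x
      have "cmod (cnj (\<phi> (?g' x)) - cnj (\<phi> (?g x))) \<le> cmod (\<phi> (?g' x)) + cmod (\<phi> (?g x))"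
        using norm_triangle_ineq4[of "cnj (\<phi> (?g' x))" "cnj (\<phi> (?g x))"] by simp
      then show "cmod (\<psi> (?g x) * (cnj (\<phi> (?g' x)) - cnj (\<phi> (?g x))))
          \<le> cmod (\<psi> (?g x)) * (cmod (\<phi> (?g' x)) + cmod (\<phi> (?g x)))"
        by (simp add: norm_mult mult_left_mono)
    qed
    finally show ?thesis .
  qed
  also have "\<dots> \<le> (\<Sum>x\<in>?F. (cmod (\<psi> (?g x)))\<^sup>2 + ((cmod (\<phi> (?g' x)))\<^sup>2 + (cmod (\<phi> (?g x)))\<^sup>2) / 2)"
    by (intro sum_mono ineq3) auto
  also have "\<dots> = (\<Sum>x\<in>?F. (cmod (\<psi> (?g x)))\<^sup>2) + ((\<Sum>x\<in>?F. (cmod (\<phi> (?g' x)))\<^sup>2) + (\<Sum>x\<in>?F. (cmod (\<phi> (?g x)))\<^sup>2)) / 2"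
    by (simp add: sum.distrib add_divide_distrib sum_divide_distrib)
  also have "\<dots> = fm ?X j \<psi> + fm ?X j \<phi>"
  proof -
    have 1: "(\<Sum>x\<in>?F. (cmod (\<psi> (?g x)))\<^sup>2) = fm ?X j \<psi>"
      unfolding fm_def by (rule reindex_ginv[OF g, where f = "\<lambda>y. (cmod (\<psi> y))\<^sup>2"]) simp
    have 2: "(\<Sum>x\<in>?F. (cmod (\<phi> (?g x)))\<^sup>2) = fm ?X j \<phi>"
      unfolding fm_def by (rule reindex_ginv[OF g, where f = "\<lambda>y. (cmod (\<phi> y))\<^sup>2"]) simp
    have 3: "(\<Sum>x\<in>?F. (cmod (\<phi> (?g' x)))\<^sup>2) = fm ?X j \<phi>"
      unfolding fm_def by (rule reindex_ginv[OF g', where f = "\<lambda>y. (cmod (\<phi> y))\<^sup>2"]) simp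
    show ?thesis using 1 2 3 by simp
  qed
  finally show ?thesis using eq by simp
qed



lemma init_mem: "0 < n \<Longrightarrow> 0 < dc \<Longrightarrow> 0 < dr \<Longrightarrow> 0 < m \<Longrightarrow> (0,0,0,0) \<in> basis_set n dc dr m"
  by (simp add: basis_mem)

lemma nrm_init: "(0,0,0,0) \<in> X \<Longrightarrow> finite X \<Longrightarrow> nrm X init_state = 1"
  unfolding nrm_def init_state_def
  by (simp add: if_distrib[of "\<lambda>z. (cmod z)\<^sup>2"] cong: if_cong)

lemma run_alg_nrm:
  assumes gA: "goodS n dc dr A" and gB: "goodS n dc dr B"
    and un: "\<forall>t\<le>T. unitary_on (basis_set n dc dr m) (U t)"
    and o: "(0,0,0,0) \<in> basis_set n dc dr m"
  shows "t \<le> T \<Longrightarrow> nrm (basis_set n dc dr m) (run_alg n dc dr m U sel A B t) = 1"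
proof (induction t)
  case 0
  then show ?case using nrm_apply_op[OF finite_basis, of n dc dr m "U 0"] un nrm_init[OF o finite_basis] by simp
next
  case (Suc t)
  have g: "goodS n dc dr (if sel t then B else A)" using gA gB by simp
  show ?case using Suc nrm_apply_op[OF finite_basis, of n dc dr m "U (Suc t)"] un nrm_oracle[OF g] by simp
qed

lemma run_alg_step:
  assumes un: "unitary_on (basis_set n dc dr m) (U (Suc t))"
    and gA: "goodS n dc dr A" and gB: "goodS n dc dr B"
    and gA': "goodS n dc dr A'" and gB': "goodS n dc dr B'"
    and sA: "\<And>i. i \<noteq> j \<Longrightarrow> A ! i = A' ! i" and sB: "\<And>i. i \<noteq> j \<Longrightarrow> B ! i = B' ! i"
  shows "cmod (ip (basis_set n dc dr m) (run_alg n dc dr m U sel A B (Suc t)) (run_alg n dc dr m U sel A' B' (Suc t)))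
       \<ge> cmod (ip (basis_set n dc dr m) (run_alg n dc dr m U sel A B t) (run_alg n dc dr m U sel A' B' t))
         - (fm (basis_set n dc dr m) j (run_alg n dc dr m U sel A B t) + fm (basis_set n dc dr m) j (run_alg n dc dr m U sel A' B' t))"
proof -
  let ?X = "basis_set n dc dr m"
  let ?S = "if sel t then B else A" and ?S' = "if sel t then B' else A'"
  let ?p = "run_alg n dc dr m U sel A B t" and ?q = "run_alg n dc dr m U sel A' B' t"
  have g: "goodS n dc dr ?S" "goodS n dc dr ?S'" using gA gB gA' gB' by auto
  have s: "\<And>i. i \<noteq> j \<Longrightarrow> ?S ! i = ?S' ! i" using sA sB by auto
  have e: "ip ?X (run_alg n dc dr m U sel A B (Suc t)) (run_alg n dc dr m U sel A' B' (Suc t))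
        = ip ?X (apply_oracle ?X dc dr ?S ?p) (apply_oracle ?X dc dr ?S' ?q)"
    using ip_apply_op[OF finite_basis un] by simp
  have d: "cmod (ip ?X (apply_oracle ?X dc dr ?S ?p) (apply_oracle ?X dc dr ?S' ?q) - ip ?X ?p ?q)
        \<le> fm ?X j ?p + fm ?X j ?q"
    by (rule ip_oracle_diff[OF g s])
  have "cmod (ip ?X ?p ?q) - cmod (ip ?X (apply_oracle ?X dc dr ?S ?p) (apply_oracle ?X dc dr ?S' ?q))
      \<le> cmod (ip ?X (apply_oracle ?X dc dr ?S ?p) (apply_oracle ?X dc dr ?S' ?q) - ip ?X ?p ?q)"
    using norm_triangle_ineq2[of "ip ?X ?p ?q" "ip ?X (apply_oracle ?X dc dr ?S ?p) (apply_oracle ?X dc dr ?S' ?q)"]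
    by (simp add: norm_minus_commute)
  then show ?thesis using d unfolding e by linarith
qed

lemma fm_sum_le:
  assumes "finite X" "finite J"
  shows "(\<Sum>j\<in>J. fm X j \<psi>) \<le> nrm X \<psi>"
proof -
  have "(\<Sum>j\<in>J. fm X j \<psi>) = (\<Sum>j\<in>J. \<Sum>x\<in>{x\<in>{x\<in>X. fst x \<in> J}. fst x = j}. (cmod (\<psi> x))\<^sup>2)"
    unfolding fm_def by (intro sum.cong refl) auto
  also have "\<dots> = (\<Sum>x\<in>{x\<in>X. fst x \<in> J}. (cmod (\<psi> x))\<^sup>2)"
    using assms by (intro sum.group) auto
  also have "\<dots> \<le> nrm X \<psi>" unfolding nrm_def using assms by (intro sum_mono2) auto
  finally show ?thesis .
qed

lemma pw1: "(a::real) * b \<le> 3/8 * a\<^sup>2 + 2/3 * b\<^sup>2"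
proof -
  have "0 \<le> (3/4 * a - b)\<^sup>2" by simp
  then show ?thesis by (simp add: power2_eq_square algebra_simps)
qed

lemma final_bound:
  assumes fin: "finite X" and n1: "nrm X \<psi> = 1" and n2: "nrm X \<phi> = 1"
    and G: "G0 \<subseteq> X" "G1 \<subseteq> X" "G0 \<inter> G1 = {}"
    and m0: "(\<Sum>x\<in>G0. (cmod (\<psi> x))\<^sup>2) \<ge> 2/3" and m1: "(\<Sum>x\<in>G1. (cmod (\<phi> x))\<^sup>2) \<ge> 2/3"
  shows "cmod (ip X \<psi> \<phi>) \<le> 17/18"
proof -
  define A0 where "A0 = (\<Sum>x\<in>G0. (cmod (\<psi> x))\<^sup>2)"
  define A1 where "A1 = (\<Sum>x\<in>X-G0. (cmod (\<psi> x))\<^sup>2)"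
  define B0 where "B0 = (\<Sum>x\<in>G0. (cmod (\<phi> x))\<^sup>2)"
  define B1 where "B1 = (\<Sum>x\<in>X-G0. (cmod (\<phi> x))\<^sup>2)"
  have fG0: "finite G0" using fin G finite_subset by blast
  have sA: "A0 + A1 = 1" using n1 unfolding A0_def A1_def nrm_def
    using sum.subset_diff[OF G(1) fin, of "\<lambda>x. (cmod (\<psi> x))\<^sup>2"] by simp
  have sB: "B0 + B1 = 1" using n2 unfolding B0_def B1_def nrm_def
    using sum.subset_diff[OF G(1) fin, of "\<lambda>x. (cmod (\<phi> x))\<^sup>2"] by simp
  have B1: "B1 \<ge> 2/3"
  proof -
    have "(\<Sum>x\<in>G1. (cmod (\<phi> x))\<^sup>2) \<le> B1" unfolding B1_def
      using G fin by (intro sum_mono2) auto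
    then show ?thesis using m1 by linarith
  qed
  have "cmod (ip X \<psi> \<phi>) \<le> (\<Sum>x\<in>X. cmod (\<psi> x) * cmod (\<phi> x))"
    unfolding ip_def using norm_sum[of "\<lambda>x. \<psi> x * cnj (\<phi> x)" X] by (simp add: norm_mult)
  also have "\<dots> = (\<Sum>x\<in>G0. cmod (\<psi> x) * cmod (\<phi> x)) + (\<Sum>x\<in>X-G0. cmod (\<psi> x) * cmod (\<phi> x))"
    using sum.subset_diff[OF G(1) fin] by (simp add: add.commute)
  also have "\<dots> \<le> (\<Sum>x\<in>G0. 3/8 * (cmod (\<psi> x))\<^sup>2 + 2/3 * (cmod (\<phi> x))\<^sup>2)
                + (\<Sum>x\<in>X-G0. 2/3 * (cmod (\<psi> x))\<^sup>2 + 3/8 * (cmod (\<phi> x))\<^sup>2)"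
  proof (rule add_mono)
    show "(\<Sum>x\<in>G0. cmod (\<psi> x) * cmod (\<phi> x)) \<le> (\<Sum>x\<in>G0. 3/8 * (cmod (\<psi> x))\<^sup>2 + 2/3 * (cmod (\<phi> x))\<^sup>2)"
      by (intro sum_mono pw1)
    show "(\<Sum>x\<in>X-G0. cmod (\<psi> x) * cmod (\<phi> x)) \<le> (\<Sum>x\<in>X-G0. 2/3 * (cmod (\<psi> x))\<^sup>2 + 3/8 * (cmod (\<phi> x))\<^sup>2)"
      using pw1 by (intro sum_mono) (simp add: mult.commute add.commute)
  qed
  also have "\<dots> = 3/8 * A0 + 2/3 * B0 + (2/3 * A1 + 3/8 * B1)"
    unfolding A0_def A1_def B0_def B1_def by (simp add: sum.distrib sum_distrib_left)
  also have "\<dots> \<le> 17/18" using sA sB B1 m0 unfolding A0_def[symmetric] by linarith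
  finally show ?thesis .
qed

lemma succ_le_mass:
  assumes "\<And>ot. lcs_rle_correct A B ot \<Longrightarrow> Q ot"
  shows "success_prob n dc dr m U sel out T A B
     \<le> (\<Sum>x\<in>{x\<in>basis_set n dc dr m. Q (out x)}. (cmod (run_alg n dc dr m U sel A B T x))\<^sup>2)"
proof -
  have "success_prob n dc dr m U sel out T A B
     \<le> (\<Sum>x\<in>basis_set n dc dr m. if Q (out x) then (cmod (run_alg n dc dr m U sel A B T x))\<^sup>2 else 0)"
    unfolding success_prob_def using assms by (intro sum_mono) auto
  also have "\<dots> = (\<Sum>x\<in>{x\<in>basis_set n dc dr m. Q (out x)}. (cmod (run_alg n dc dr m U sel A B T x))\<^sup>2)"
    using finite_basis by (simp add: sum.inter_filter)
  finally show ?thesis .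
qed



definition rn :: "nat \<Rightarrow> nat \<Rightarrow> nat \<Rightarrow> nat \<Rightarrow> nat set \<Rightarrow> nat \<Rightarrow> nat \<times> nat" where
  "rn k L a b Z i = (if i < k then (i, if i \<in> Z then 4 else 2) else if i = k then (a, 1)
     else if i = k + 1 then (k, L) else (if even i then b else a, 1))"

definition inst :: "nat \<Rightarrow> nat \<Rightarrow> nat \<Rightarrow> nat \<Rightarrow> nat \<Rightarrow> nat set \<Rightarrow> rle" where
  "inst n k L a b Z = map (rn k L a b Z) [0..<n]"

definition plen :: "nat \<Rightarrow> nat set \<Rightarrow> nat" where
  "plen k Z = (\<Sum>i<k. if i \<in> Z then 4 else 2)"

lemma decode_append[simp]: "decode (xs @ ys) = decode xs @ decode ys"
  by (simp add: decode_def)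

lemma decode_single[simp]: "decode [(c, r)] = replicate r c"
  by (simp add: decode_def)

lemma decode_Nil[simp]: "decode [] = []"
  by (simp add: decode_def)

lemma decode_Cons[simp]: "decode (x # xs) = replicate (snd x) (fst x) @ decode xs"
  by (cases x) (simp add: decode_def)

lemma length_decode: "length (decode S) = sum_list (map snd S)"
  by (induction S) (auto simp: decode_def)

lemma set_decode: "set (decode S) \<subseteq> fst ` set S"
  by (induction S) auto

lemma upt_split3: "k + 2 \<le> n \<Longrightarrow> [0..<n] = [0..<k] @ [k, k+1] @ [k+2..<n]"
proof -
  assume a: "k + 2 \<le> n"
  have "[0..<n] = [0..<k] @ [k..<n]" using a upt_add_eq_append[of 0 k "n - k"] by simp
  also have "[k..<n] = [k, k+1] @ [k+2..<n]" using a
    by (simp add: upt_conv_Cons)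
  finally show ?thesis .
qed

lemma decode_inst:
  assumes "k + 2 \<le> n"
  shows "decode (inst n k L a b Z) = decode (map (rn k L a b Z) [0..<k]) @ [a] @ replicate L k
           @ decode (map (rn k L a b Z) [k+2..<n])"
  using upt_split3[OF assms] by (simp add: inst_def rn_def)

lemma set_tail: "set (decode (map (rn k L a b Z) [k+2..<n])) \<subseteq> {a, b}"
proof -
  have "fst ` set (map (rn k L a b Z) [k+2..<n]) \<subseteq> {a, b}" by (auto simp: rn_def)
  then show ?thesis using set_decode[of "map (rn k L a b Z) [k+2..<n]"] by blast
qed

lemma set_head: "set (decode (map (rn k L a b Z) [0..<k])) \<subseteq> {0..<k}"
proof -
  have "fst ` set (map (rn k L a b Z) [0..<k]) \<subseteq> {0..<k}" by (auto simp: rn_def)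
  then show ?thesis using set_decode[of "map (rn k L a b Z) [0..<k]"] by blast
qed

lemma len_head: "length (decode (map (rn k L a b Z) [0..<k])) = plen k Z"
  unfolding length_decode plen_def
  by (simp add: sum_list_map_eq_sum_count2 rn_def sum_set_upt_conv_sum_list_nat[symmetric] atLeast0LessThan comp_def)

lemma occ_nth: "occurs_at u D p \<Longrightarrow> i < length u \<Longrightarrow> u ! i = D ! (p + i)"
  unfolding occurs_at_def by (metis add_leD1 le_add_diff_inverse nth_drop nth_take)

lemma occ_set: "occurs_at u D p \<Longrightarrow> set u \<subseteq> set D"
  unfolding occurs_at_def by (metis set_drop_subset set_take_subset subset_trans)

lemma occ_split:
  assumes D: "D = P @ [a] @ Q @ R" and aC: "a \<notin> C" and RC: "set R \<inter> C = {}"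
    and uC: "set u \<subseteq> C" and occ: "occurs_at u D p" and une: "u \<noteq> []"
  shows "p + length u \<le> length P \<or> (length P < p \<and> p + length u \<le> length P + 1 + length Q)"
proof (rule ccontr)
  assume c: "\<not> ?thesis"
  have len: "p + length u \<le> length D" using occ by (simp add: occurs_at_def)
  show False
  proof (cases "p \<le> length P")
    case True
    then have lt: "length P - p < length u" using c by auto
    have "u ! (length P - p) = D ! (length P)" using occ_nth[OF occ lt] True by simp
    also have "\<dots> = a" using D by (simp add: nth_append)
    finally have "a \<in> set u" using lt by (metis nth_mem)
    then show False using uC aC by auto
  next
    case False
    define q where "q = max p (length P + 1 + length Q)"
    have l0: "0 < length u" using une by simp
    have pP: "length P < p" using False by simp
    have qlt: "q - p < length u"
    proof (cases "p \<le> length P + 1 + length Q")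
      case True then show ?thesis using c pP by (simp add: q_def max_def)
    next
      case False then show ?thesis using l0 by (simp add: q_def max_def)
    qed
    have q1: "q \<ge> length P + 1 + length Q" by (simp add: q_def)
    have q2: "q < length D" using qlt len by (auto simp: q_def)
    have "u ! (q - p) = D ! q" using occ_nth[OF occ qlt] by (simp add: q_def)
    also have "\<dots> = R ! (q - (length P + 1 + length Q))"
    proof -
      have D': "D = (P @ [a] @ Q) @ R" using D by simp
      show ?thesis using q1 by (subst D', subst nth_append) simp
    qed
    finally have "u ! (q - p) \<in> set R" using q1 q2 D by (simp add: nth_mem)
    moreover have "u ! (q - p) \<in> set u" using qlt by simp
    ultimately show False using uC RC by auto
  qed
qed

lemma occ_mid: "occurs_at u (P @ u @ R) (length P)"
  by (simp add: occurs_at_def)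

lemma occ_pre: "occurs_at u (u @ R) 0"
  by (simp add: occurs_at_def)

lemma run_start_mono: "i \<le> j \<Longrightarrow> run_start S i \<le> run_start S j"
proof -
  assume "i \<le> j"
  then have "take j S = take i S @ take (j - i) (drop i S)"
    by (metis le_add_diff_inverse take_add)
  then show ?thesis unfolding run_start_def by simp
qed

lemma run_start_k:
  assumes "k + 2 \<le> n"
  shows "run_start (inst n k L a b Z) k = plen k Z" "run_start (inst n k L a b Z) (Suc k) = plen k Z + 1"
proof -
  have t1: "take k (inst n k L a b Z) = map (rn k L a b Z) [0..<k]"
    using assms by (simp add: inst_def take_map)
  have t2: "take (Suc k) (inst n k L a b Z) = map (rn k L a b Z) [0..<k] @ [(a, 1)]"
    using assms upt_split3[OF assms] by (simp add: inst_def take_map rn_def)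
  show "run_start (inst n k L a b Z) k = plen k Z"
    using len_head[of k L a b Z] t1 by (simp add: run_start_def length_decode)
  show "run_start (inst n k L a b Z) (Suc k) = plen k Z + 1"
    using len_head[of k L a b Z] t2 by (simp add: run_start_def length_decode)
qed



lemma length_inst[simp]: "length (inst n k L a b Z) = n"
  by (simp add: inst_def)

lemma valid_inst:
  assumes "a \<noteq> b" "k < a" "k < b" "a < dc" "b < dc" "4 < dr" "L < dr" "0 < L"
  shows "valid_rle dc dr (inst n k L a b Z)"
  unfolding valid_rle_def
proof (rule conjI; intro allI impI)
  fix i assume "i < length (inst n k L a b Z)"
  then show "fst (inst n k L a b Z ! i) < dc \<and> 0 < snd (inst n k L a b Z ! i) \<and> snd (inst n k L a b Z ! i) < dr"
    using assms by (auto simp: inst_def rn_def)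
next
  fix i assume i: "Suc i < length (inst n k L a b Z)"
  show "fst (inst n k L a b Z ! i) \<noteq> fst (inst n k L a b Z ! Suc i)"
    using i assms by (auto simp: inst_def rn_def nth_append)
qed

lemma good_of_valid: "valid_rle dc dr S \<Longrightarrow> length S = n \<Longrightarrow> goodS n dc dr S"
  by (auto simp: valid_rle_def goodS_def)

lemma nth_beyond: "length xs = length ys \<Longrightarrow> length xs \<le> i \<Longrightarrow> xs ! i = ys ! i"
  by (metis append_Nil2 nth_append not_le)

lemma inst_differ: "i \<noteq> j \<Longrightarrow> inst n k L a b Z ! i = inst n k L a b (insert j Z) ! i"
proof (cases "i < n")
  case True
  assume "i \<noteq> j" then show ?thesis using True by (simp add: inst_def rn_def)
next
  case False then show ?thesis by (intro nth_beyond) auto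
qed

lemma head_indep: "map (rn k L a b Z) [0..<k] = map (rn k L a' b' Z) [0..<k]"
  by (simp add: rn_def)

lemma plen_card: "Z \<subseteq> {0..<k} \<Longrightarrow> plen k Z = 2 * k + 2 * card Z"
proof -
  assume Z: "Z \<subseteq> {0..<k}"
  have "plen k Z = (\<Sum>i<k. 2 + (if i \<in> Z then 2 else 0))"
    unfolding plen_def by (intro sum.cong) auto
  also have "\<dots> = (\<Sum>i<k. 2) + (\<Sum>i<k. if i \<in> Z then 2 else 0)" by (rule sum.distrib)
  also have "\<dots> = 2 * k + (\<Sum>i<k. if i \<in> Z then 2 else 0)" by simp
  also have "(\<Sum>i<k. if i \<in> Z then 2 else 0) = (\<Sum>i\<in>{..<k} \<inter> Z. (2::nat))"
    by (simp add: sum.inter_restrict[symmetric])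
  also have "{..<k} \<inter> Z = Z" using Z by auto
  finally show ?thesis by simp
qed

locale lcsinst =
  fixes n k L :: nat and Z :: "nat set"
  assumes kn: "k + 2 \<le> n" and k0: "0 < k"
begin

abbreviation "AA \<equiv> inst n k L (k+1) (k+2) Z"
abbreviation "BB \<equiv> inst n k L (k+3) (k+4) Z"
abbreviation "PD \<equiv> decode (map (rn k L (k+1) (k+2) Z) [0..<k])"

lemma dA: "decode AA = PD @ [k+1] @ replicate L k @ decode (map (rn k L (k+1) (k+2) Z) [k+2..<n])"
  using decode_inst[OF kn] by simp

lemma dB: "decode BB = PD @ [k+3] @ replicate L k @ decode (map (rn k L (k+3) (k+4) Z) [k+2..<n])"
  using decode_inst[OF kn, of L "k+3" "k+4" Z] head_indep[of k L "k+3" "k+4" Z "k+1" "k+2"] by simp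

lemma setB: "set (decode BB) \<subseteq> {0..<k} \<union> {k, k+3, k+4}"
  using dB set_head[of k L "k+1" "k+2" Z] set_tail[of k L "k+3" "k+4" Z n] by auto

lemma PD_common: "common_substr AA BB PD"
  unfolding common_substr_def using dA dB occ_pre by metis

lemma Q_common: "common_substr AA BB (replicate L k)"
  unfolding common_substr_def using dA dB occ_mid
  by (metis append.assoc append_Cons append_Nil length_append_singleton)

lemma lenPD: "length PD = plen k Z" by (rule len_head)

lemma plen_pos: "0 < plen k Z"
  unfolding plen_def using k0 by (intro sum_pos) auto

lemma occ_A:
  assumes cs: "common_substr AA BB u" and occ: "occurs_at u (decode AA) p" and une: "u \<noteq> []"
  shows "p + length u \<le> plen k Z \<or> (plen k Z < p \<and> p + length u \<le> plen k Z + 1 + L)"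
proof -
  obtain q where q: "occurs_at u (decode BB) q" using cs by (auto simp: common_substr_def)
  have uC: "set u \<subseteq> set (decode BB)" by (rule occ_set[OF q])
  have "p + length u \<le> length PD \<or> (length PD < p \<and> p + length u \<le> length PD + 1 + length (replicate L k))"
  proof (rule occ_split[OF dA _ _ uC occ une])
    show "k + 1 \<notin> set (decode BB)" using setB by auto
    show "set (decode (map (rn k L (k+1) (k+2) Z) [k+2..<n])) \<inter> set (decode BB) = {}"
    proof -
      have "{k+1, k+2} \<inter> ({0..<k} \<union> {k, k+3, k+4}) = {}" by auto
      then show ?thesis using setB set_tail[of k L "k+1" "k+2" Z n] by blast
    qed
  qed
  then show ?thesis using lenPD by simp
qed

lemma corr_big:
  assumes Lp: "L < plen k Z" and c: "lcs_rle_correct AA BB (iA, iB, l)"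
  shows "iA < k"
proof -
  obtain u p where lu: "longest_common_substr AA BB u" and occ: "occurs_at u (decode AA) p"
    and st: "starts_in_run AA iA p"
    using c by (auto simp: lcs_rle_correct_def)
  have lge: "plen k Z \<le> length u" using lu PD_common lenPD by (auto simp: longest_common_substr_def)
  then have une: "u \<noteq> []" using plen_pos by auto
  have cs: "common_substr AA BB u" using lu by (simp add: longest_common_substr_def)
  have "p + length u \<le> plen k Z" using occ_A[OF cs occ une] Lp lge by auto
  then have p: "p < plen k Z" using une by (cases u) auto
  show ?thesis
  proof (rule ccontr)
    assume "\<not> iA < k"
    then have "run_start AA k \<le> run_start AA iA" by (intro run_start_mono) simp
    then show False using st p run_start_k[OF kn] by (auto simp: starts_in_run_def)
  qed
qed

lemma corr_small:
  assumes Lp: "plen k Z < L" and c: "lcs_rle_correct AA BB (iA, iB, l)"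
  shows "k < iA"
proof -
  obtain u p where lu: "longest_common_substr AA BB u" and occ: "occurs_at u (decode AA) p"
    and st: "starts_in_run AA iA p"
    using c by (auto simp: lcs_rle_correct_def)
  have lge: "L \<le> length u" using lu Q_common by (auto simp: longest_common_substr_def)
  then have une: "u \<noteq> []" using Lp by auto
  have cs: "common_substr AA BB u" using lu by (simp add: longest_common_substr_def)
  have p: "plen k Z < p" using occ_A[OF cs occ une] Lp lge by auto
  show ?thesis
  proof (rule ccontr)
    assume "\<not> k < iA"
    then have "run_start AA (Suc iA) \<le> run_start AA (Suc k)" by (intro run_start_mono) simp
    then show False using st p run_start_k[OF kn] by (auto simp: starts_in_run_def)
  qed
qed

end



lemma pair_reindex:
  fixes F :: "nat set \<Rightarrow> nat \<Rightarrow> real"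
  shows "(\<Sum>Z\<in>{Z. Z \<subseteq> {0..<k} \<and> card Z = h}. \<Sum>j\<in>{0..<k}-Z. F (insert j Z) j)
       = (\<Sum>Y\<in>{Y. Y \<subseteq> {0..<k} \<and> card Y = Suc h}. \<Sum>j\<in>Y. F Y j)"
proof -
  let ?X = "{Z. Z \<subseteq> {0..<k} \<and> card Z = h}" and ?Y = "{Y. Y \<subseteq> {0..<k} \<and> card Y = Suc h}"
  have fX: "finite ?X" by (rule finite_subset[of _ "Pow {0..<k}"]) auto
  have fY: "finite ?Y" by (rule finite_subset[of _ "Pow {0..<k}"]) auto
  have "(\<Sum>Z\<in>?X. \<Sum>j\<in>{0..<k}-Z. F (insert j Z) j) = (\<Sum>(Z,j)\<in>Sigma ?X (\<lambda>Z. {0..<k}-Z). F (insert j Z) j)"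
    using fX by (intro sum.Sigma) auto
  also have "\<dots> = (\<Sum>(Y,j)\<in>Sigma ?Y (\<lambda>Y. Y). F Y j)"
  proof (rule sum.reindex_bij_witness[where i = "\<lambda>(Y,j). (Y - {j}, j)" and j = "\<lambda>(Z,j). (insert j Z, j)"])
    fix a assume a: "a \<in> Sigma ?X (\<lambda>Z. {0..<k}-Z)"
    obtain Z j where aZ: "a = (Z, j)" by (cases a)
    have Z: "Z \<subseteq> {0..<k}" "card Z = h" "j < k" "j \<notin> Z" using a aZ by auto
    have fZ: "finite Z" using Z(1) finite_subset by blast
    show "(\<lambda>(Y,j). (Y - {j}, j)) ((\<lambda>(Z,j). (insert j Z, j)) a) = a" using aZ Z by auto
    show "(\<lambda>(Z,j). (insert j Z, j)) a \<in> Sigma ?Y (\<lambda>Y. Y)" using aZ Z fZ by auto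
    show "(case (\<lambda>(Z,j). (insert j Z, j)) a of (Y, j) \<Rightarrow> F Y j) = (case a of (Z, j) \<Rightarrow> F (insert j Z) j)"
      using aZ by simp
  next
    fix b assume b: "b \<in> Sigma ?Y (\<lambda>Y. Y)"
    obtain Y j where bY: "b = (Y, j)" by (cases b)
    have Y: "Y \<subseteq> {0..<k}" "card Y = Suc h" "j \<in> Y" using b bY by auto
    have fY: "finite Y" using Y(1) finite_subset by blast
    show "(\<lambda>(Z,j). (insert j Z, j)) ((\<lambda>(Y,j). (Y - {j}, j)) b) = b" using bY Y by auto
    show "(\<lambda>(Y,j). (Y - {j}, j)) b \<in> Sigma ?X (\<lambda>Z. {0..<k}-Z)" using bY Y fY by auto
  qed
  also have "\<dots> = (\<Sum>Y\<in>?Y. \<Sum>j\<in>Y. F Y j)"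
    using fY by (intro sum.Sigma[symmetric]) (auto intro: finite_subset)
  finally show ?thesis .
qed


lemma adv_bound:
  fixes n dc dr m T :: nat and U :: "nat \<Rightarrow> qop" and sel and out and h k L :: nat
  assumes kdef: "k = 2 * h + 1" and Ldef: "L = 2 * k + 2 * h + 1"
    and kn: "k + 5 \<le> n" and Ln: "L \<le> n" and dcn: "dc \<ge> n" and drn: "dr > n"
    and un: "\<forall>t \<le> T. unitary_on (basis_set n dc dr m) (U t)"
    and succ: "\<forall>A B. valid_rle dc dr A \<longrightarrow> valid_rle dc dr B \<longrightarrow>
              length A = n \<longrightarrow> length B = n \<longrightarrow>
              success_prob n dc dr m U sel out T A B \<ge> 2/3"
  shows "real (h + 1) \<le> 36 * real T"
proof -
  let ?X = "basis_set n dc dr m"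
  define AA where "AA Z = inst n k L (k+1) (k+2) Z" for Z
  define BB where "BB Z = inst n k L (k+3) (k+4) Z" for Z
  define psi where "psi Z t = run_alg n dc dr m U sel (AA Z) (BB Z) t" for Z t
  define Xs where "Xs = {Z. Z \<subseteq> {0..<k} \<and> card Z = h}"
  define Ys where "Ys = {Y. Y \<subseteq> {0..<k} \<and> card Y = Suc h}"
  define W where "W t = (\<Sum>Z\<in>Xs. \<Sum>j\<in>{0..<k}-Z. cmod (ip ?X (psi Z t) (psi (insert j Z) t)))" for t
  have fX: "finite Xs" unfolding Xs_def by (rule finite_subset[of _ "Pow {0..<k}"]) auto
  have fY: "finite Ys" unfolding Ys_def by (rule finite_subset[of _ "Pow {0..<k}"]) auto
  have vA: "valid_rle dc dr (AA Z)" for Z unfolding AA_def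
    using kn dcn drn Ln kdef Ldef by (intro valid_inst) auto
  have vB: "valid_rle dc dr (BB Z)" for Z unfolding BB_def
    using kn dcn drn Ln kdef Ldef by (intro valid_inst) auto
  have gA: "goodS n dc dr (AA Z)" for Z using good_of_valid[OF vA] by (simp add: AA_def)
  have gB: "goodS n dc dr (BB Z)" for Z using good_of_valid[OF vB] by (simp add: BB_def)
  have sc: "success_prob n dc dr m U sel out T (AA Z) (BB Z) \<ge> 2/3" for Z
    using succ vA vB by (simp add: AA_def BB_def)
  have m0: "0 < m"
  proof (rule ccontr)
    assume "\<not> 0 < m"
    then have "?X = {}" by (simp add: basis_set_def)
    then show False using sc[of "{}"] by (simp add: success_prob_def)
  qed
  have o: "(0,0,0,0) \<in> ?X" using m0 kn dcn drn by (intro init_mem) auto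
  have nrm1: "t \<le> T \<Longrightarrow> nrm ?X (psi Z t) = 1" for Z t
    unfolding psi_def using run_alg_nrm[OF gA gB un o] by simp
  have kn2: "k + 2 \<le> n" using kn by simp
  have k0: "0 < k" using kdef by simp
  interpret li: lcsinst n k L Z for Z using kn2 k0 by unfold_locales
  have cardrel: "real (card Xs) * real (h+1) = real (card Ys) * real (h+1)"
  proof -
    have "(\<Sum>Z\<in>Xs. \<Sum>j\<in>{0..<k}-Z. (1::real)) = (\<Sum>Y\<in>Ys. \<Sum>j\<in>Y. (1::real))"
      unfolding Xs_def Ys_def by (rule pair_reindex[where F = "\<lambda>_ _. 1"])
    moreover have "(\<Sum>Z\<in>Xs. \<Sum>j\<in>{0..<k}-Z. (1::real)) = real (card Xs) * real (h+1)"
    proof -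
      have "(\<Sum>Z\<in>Xs. \<Sum>j\<in>{0..<k}-Z. (1::real)) = (\<Sum>Z\<in>Xs. real (h+1))"
      proof (rule sum.cong[OF refl])
        fix Z assume "Z \<in> Xs"
        then have "card ({0..<k} - Z) = k - h" unfolding Xs_def by (auto simp: card_Diff_subset finite_subset)
        then show "(\<Sum>j\<in>{0..<k}-Z. (1::real)) = real (h+1)" using kdef by simp
      qed
      then show ?thesis by simp
    qed
    moreover have "(\<Sum>Y\<in>Ys. \<Sum>j\<in>Y. (1::real)) = real (card Ys) * real (h+1)"
      unfolding Ys_def by simp
    ultimately show ?thesis by simp
  qed
  have cXY: "card Xs = card Ys" using cardrel by simp
  have cX0: "0 < card Xs"
  proof -
    have "{0..<h} \<in> Xs" unfolding Xs_def using kdef by auto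
    then show ?thesis using fX card_gt_0_iff by blast
  qed
  have W0: "W 0 = real (card Xs) * real (h+1)"
  proof -
    have "W 0 = (\<Sum>Z\<in>Xs. \<Sum>j\<in>{0..<k}-Z. (1::real))"
      unfolding W_def
    proof (intro sum.cong refl)
      fix Z j
      have "psi (insert j Z) 0 = psi Z 0" by (simp add: psi_def)
      then show "cmod (ip ?X (psi Z 0) (psi (insert j Z) 0)) = 1"
        using nrm1[of 0 Z] by (simp add: ip_self)
    qed
    also have "\<dots> = real (card Xs) * real (h+1)"
    proof -
      have "(\<Sum>Z\<in>Xs. \<Sum>j\<in>{0..<k}-Z. (1::real)) = (\<Sum>Z\<in>Xs. real (h+1))"
      proof (rule sum.cong[OF refl])
        fix Z assume "Z \<in> Xs"
        then have "card ({0..<k} - Z) = k - h" unfolding Xs_def by (auto simp: card_Diff_subset finite_subset)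
        then show "(\<Sum>j\<in>{0..<k}-Z. (1::real)) = real (h+1)" using kdef by simp
      qed
      then show ?thesis by simp
    qed
    finally show ?thesis .
  qed
  have Wstep: "W (Suc t) \<ge> W t - (real (card Xs) + real (card Ys))" if t: "Suc t \<le> T" for t
  proof -
    have uS: "unitary_on ?X (U (Suc t))" using un t by auto
    have a: "W (Suc t) \<ge> (\<Sum>Z\<in>Xs. \<Sum>j\<in>{0..<k}-Z. cmod (ip ?X (psi Z t) (psi (insert j Z) t))
                 - (fm ?X j (psi Z t) + fm ?X j (psi (insert j Z) t)))"
      unfolding W_def
    proof (intro sum_mono)
      fix Z j assume "j \<in> {0..<k} - Z"
      show "cmod (ip ?X (psi Z t) (psi (insert j Z) t)) - (fm ?X j (psi Z t) + fm ?X j (psi (insert j Z) t))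
           \<le> cmod (ip ?X (psi Z (Suc t)) (psi (insert j Z) (Suc t)))"
        unfolding psi_def
        by (rule run_alg_step[where U = U and t = t and n = n and dc = dc and dr = dr and m = m, OF uS gA[of Z] gB[of Z] gA[of "insert j Z"] gB[of "insert j Z"]]) (unfold AA_def BB_def, (rule inst_differ, assumption)+)
    qed
    have b: "(\<Sum>Z\<in>Xs. \<Sum>j\<in>{0..<k}-Z. cmod (ip ?X (psi Z t) (psi (insert j Z) t))
                 - (fm ?X j (psi Z t) + fm ?X j (psi (insert j Z) t)))
        = W t - ((\<Sum>Z\<in>Xs. \<Sum>j\<in>{0..<k}-Z. fm ?X j (psi Z t))
                         + (\<Sum>Z\<in>Xs. \<Sum>j\<in>{0..<k}-Z. fm ?X j (psi (insert j Z) t)))"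
      unfolding W_def by (simp add: sum_subtractf sum.distrib)
    have c: "(\<Sum>Z\<in>Xs. \<Sum>j\<in>{0..<k}-Z. fm ?X j (psi (insert j Z) t))
             = (\<Sum>Y\<in>Ys. \<Sum>j\<in>Y. fm ?X j (psi Y t))"
      unfolding Xs_def Ys_def by (rule pair_reindex[where F = "\<lambda>Y j. fm ?X j (psi Y t)"])
    have 1: "W (Suc t) \<ge> W t - ((\<Sum>Z\<in>Xs. \<Sum>j\<in>{0..<k}-Z. fm ?X j (psi Z t))
                         + (\<Sum>Y\<in>Ys. \<Sum>j\<in>Y. fm ?X j (psi Y t)))" using a b c by simp
    have 2: "(\<Sum>Z\<in>Xs. \<Sum>j\<in>{0..<k}-Z. fm ?X j (psi Z t)) \<le> (\<Sum>Z\<in>Xs. 1)"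
    proof (rule sum_mono)
      fix Z show "(\<Sum>j\<in>{0..<k}-Z. fm ?X j (psi Z t)) \<le> 1"
        using fm_sum_le[OF finite_basis[of n dc dr m], where J = "{0..<k}-Z" and \<psi> = "psi Z t"] nrm1[of t Z] t by simp
    qed
    have 3: "(\<Sum>Y\<in>Ys. \<Sum>j\<in>Y. fm ?X j (psi Y t)) \<le> (\<Sum>Y\<in>Ys. 1)"
    proof (rule sum_mono)
      fix Y assume "Y \<in> Ys"
      then have "finite Y" unfolding Ys_def by (auto intro: finite_subset)
      then show "(\<Sum>j\<in>Y. fm ?X j (psi Y t)) \<le> 1"
        using fm_sum_le[OF finite_basis[of n dc dr m], where J = Y and \<psi> = "psi Y t"] nrm1[of t Y] t by simp
    qed
    show ?thesis using 1 2 3 by simp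
  qed
  have Wind: "t \<le> T \<Longrightarrow> W t \<ge> W 0 - real t * (real (card Xs) + real (card Ys))" for t
  proof (induction t)
    case 0 then show ?case by simp
  next
    case (Suc t)
    then show ?case using Wstep[of t] by (simp add: algebra_simps)
  qed
  have WT: "W T \<le> (\<Sum>Z\<in>Xs. \<Sum>j\<in>{0..<k}-Z. (17/18::real))"
    unfolding W_def
  proof (intro sum_mono)
    fix Z j assume Z: "Z \<in> Xs" and j: "j \<in> {0..<k} - Z"
    have Zs: "Z \<subseteq> {0..<k}" "card Z = h" using Z by (auto simp: Xs_def)
    have fZ: "finite Z" using Zs finite_subset by blast
    have Ys': "insert j Z \<subseteq> {0..<k}" "card (insert j Z) = h + 1" using Zs j fZ by auto
    let ?G0 = "{x\<in>?X. k < fst (out x)}" and ?G1 = "{x\<in>?X. fst (out x) < k}"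
    have pl0: "plen k Z < L" using plen_card[OF Zs(1)] Zs Ldef by simp
    have pl1: "L < plen k (insert j Z)" using plen_card[OF Ys'(1)] Ys' Ldef by simp
    have m0: "(\<Sum>x\<in>?G0. (cmod (psi Z T x))\<^sup>2) \<ge> 2/3"
    proof -
      have "success_prob n dc dr m U sel out T (AA Z) (BB Z) \<le> (\<Sum>x\<in>?G0. (cmod (psi Z T x))\<^sup>2)"
        unfolding psi_def
      proof (rule succ_le_mass)
        fix ot assume "lcs_rle_correct (AA Z) (BB Z) ot"
        then show "k < fst ot" using li.corr_small[OF pl0] by (cases ot) (auto simp: AA_def BB_def)
      qed
      then show ?thesis using sc[of Z] by linarith
    qed
    have m1: "(\<Sum>x\<in>?G1. (cmod (psi (insert j Z) T x))\<^sup>2) \<ge> 2/3"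
    proof -
      have "success_prob n dc dr m U sel out T (AA (insert j Z)) (BB (insert j Z))
          \<le> (\<Sum>x\<in>?G1. (cmod (psi (insert j Z) T x))\<^sup>2)"
        unfolding psi_def
      proof (rule succ_le_mass)
        fix ot assume "lcs_rle_correct (AA (insert j Z)) (BB (insert j Z)) ot"
        then show "fst ot < k" using li.corr_big[OF pl1] by (cases ot) (auto simp: AA_def BB_def)
      qed
      then show ?thesis using sc[of "insert j Z"] by linarith
    qed
    show "cmod (ip ?X (psi Z T) (psi (insert j Z) T)) \<le> 17/18"
      by (rule final_bound[OF finite_basis nrm1 nrm1 _ _ _ m0 m1]) auto
  qed
  also have "\<dots> = 17/18 * W 0"
  proof -
    have "(\<Sum>Z\<in>Xs. \<Sum>j\<in>{0..<k}-Z. (17/18::real)) = (\<Sum>Z\<in>Xs. 17/18 * real (h+1))"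
    proof (rule sum.cong[OF refl])
      fix Z assume "Z \<in> Xs"
      then have "card ({0..<k} - Z) = k - h" unfolding Xs_def by (auto simp: card_Diff_subset finite_subset)
      then show "(\<Sum>j\<in>{0..<k}-Z. (17/18::real)) = 17/18 * real (h+1)" using kdef by simp
    qed
    then show ?thesis using W0 by simp
  qed
  finally have WT2: "W T \<le> 17/18 * W 0" .
  have "W 0 - real T * (real (card Xs) + real (card Ys)) \<le> 17/18 * W 0" using Wind[of T] WT2 by simp
  then have "real (card Xs) * real (h+1) / 18 \<le> real T * (2 * real (card Xs))" using W0 cXY by simp
  then have "real (card Xs) * (real (h+1)) \<le> real (card Xs) * (36 * real T)" by (simp add: algebra_simps)
  then show ?thesis using cX0 by simp
qed


theorem corollary2:
  "\<exists>c::real. c > 0 \<and> (\<exists>k::nat. \<exists>N0::nat. \<forall>n \<ge> N0.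
     \<forall>dc dr m T (U :: nat \<Rightarrow> qop) sel out.
       dc \<ge> n \<longrightarrow> dr > n \<longrightarrow>
       (\<forall>t \<le> T. unitary_on (basis_set n dc dr m) (U t)) \<longrightarrow>
       (\<forall>A B. valid_rle dc dr A \<longrightarrow> valid_rle dc dr B \<longrightarrow>
              length A = n \<longrightarrow> length B = n \<longrightarrow>
              success_prob n dc dr m U sel out T A B \<ge> 2/3) \<longrightarrow>
       real T \<ge> c * real n / (ln (real n)) ^ k)"
proof (rule exI[of _ "1/432"], rule conjI, simp, rule exI[of _ "0::nat"], rule exI[of _ "16::nat"], intro allI impI)
  fix n dc dr m T sel and U :: "nat \<Rightarrow> qop" and out :: "basis \<Rightarrow> nat \<times> nat \<times> nat"
  assume n16: "16 \<le> n" and dcn: "n \<le> dc" and drn: "n < dr"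
    and un: "\<forall>t\<le>T. unitary_on (basis_set n dc dr m) (U t)"
    and succ: "\<forall>A B. valid_rle dc dr A \<longrightarrow> valid_rle dc dr B \<longrightarrow>
              length A = n \<longrightarrow> length B = n \<longrightarrow>
              success_prob n dc dr m U sel out T A B \<ge> 2/3"
  define h where "h = (n - 3) div 6"
  have h1: "6 * h \<le> n - 3" unfolding h_def by simp
  have h2: "n - 3 < 6 * h + 6" unfolding h_def by simp
  have a: "real (h + 1) \<le> 36 * real T"
    by (rule adv_bound[where k = "2 * h + 1" and L = "2 * (2 * h + 1) + 2 * h + 1", OF refl refl _ _ dcn drn un succ])
       (use h1 h2 n16 in auto)
  have "n \<le> 12 * (h + 1)" using h2 n16 by presburger
  then have "real n \<le> real (12 * (h + 1))" by (simp only: of_nat_le_iff)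
  then have b: "real n \<le> 12 * real (h + 1)" by simp
  have c: "12 * real (h+1) \<le> 12 * (36 * real T)" using a by (rule mult_left_mono) simp
  have "real n \<le> 12 * (36 * real T)" using order_trans[OF b c] .
  then have "1/432 * real n \<le> real T" by simp
  then show "1/432 * real n / (ln (real n)) ^ 0 \<le> real T" by simp
qed

end
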